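(* Let $G$ be a finite unweighted undirected graph with $n$ nodes. Let $H$ be the spanning subgraph of $G$ obtained as follows: start with all nodes of $G$ and no edges; for each node $x$ of $G$, add to $H$ exactly $\lfloor n^{1/3} \rfloor$ edges of $G$ incident to $x$ (chosen arbitrarily), or, if $\deg_G(x) < \lfloor n^{1/3} \rfloor$, add all edges of $G$ incident to $x$. Then apply $6$-spanner-completion to $H$. Regardless of the choices made (of initial edges, of violating pairs, and of shortest paths), the resulting graph $H$ has at most $O(n^{4/3})$ edges.
   Context: For a graph $F$ and nodes $u,v$, $d_F(u,v)$ denotes the length (number of edges) of a shortest path from $u$ to $v$ in $F$ ($\infty$ if none exists). A spanning subgraph $H$ of $G$ is an additive $k$-spanner of $G$ if $d_H(u,v) \le d_G(u,v)+k$ for every pair of nodes $u,v$. The procedure $k$-spanner-completion applied to a spanning subgraph $H$ of $G$ is: as long as there exists a pair of nodes $u,v$ with $d_H(u,v) > d_G(u,v)+k$, pick such a pair, find a shortest path from $u$ to $v$ in $G$, and add all edges of this path to $H$. When it terminates, $H$ is an additive $k$-spanner of $G$. The $O(\cdot)$ bound refers to an absolute constant independent of $G$ and $n$. *)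

theory Defs
  imports Complex_Main "HOL-Library.Extended_Nat"
begin

definition simple_graph :: "'a set \<Rightarrow> 'a set set \<Rightarrow> bool" where
  "simple_graph V E \<longleftrightarrow> finite V \<and>
     E \<subseteq> {e. \<exists>a b. a \<in> V \<and> b \<in> V \<and> a \<noteq> b \<and> e = {a, b}}"

definition walk :: "'a set set \<Rightarrow> 'a list \<Rightarrow> bool" where
  "walk E xs \<longleftrightarrow> xs \<noteq> [] \<and> (\<forall>i. Suc i < length xs \<longrightarrow> {xs ! i, xs ! Suc i} \<in> E)"

definition walk_edges :: "'a list \<Rightarrow> 'a set set" where
  "walk_edges xs = {{xs ! i, xs ! Suc i} | i. Suc i < length xs}"

text \<open>Distance d_F(u,v) in the graph with edge set E (infinity if no path).\<close>
definition dist :: "'a set set \<Rightarrow> 'a \<Rightarrow> 'a \<Rightarrow> enat" where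
  "dist E u v = Inf {enat (length xs - 1) | xs. walk E xs \<and> hd xs = u \<and> last xs = v}"

definition degree :: "'a set set \<Rightarrow> 'a \<Rightarrow> nat" where
  "degree E x = card {e \<in> E. x \<in> e}"

definition completion_step :: "'a set \<Rightarrow> 'a set set \<Rightarrow> nat \<Rightarrow> 'a set set \<Rightarrow> 'a set set \<Rightarrow> bool" where
  "completion_step V E k H H' \<longleftrightarrow>
     (\<exists>u v p. u \<in> V \<and> v \<in> V \<and> dist H u v > dist E u v + enat k \<and>
        walk E p \<and> hd p = u \<and> last p = v \<and> enat (length p - 1) = dist E u v \<and>
        H' = H \<union> walk_edges p)"

definition additive_spanner :: "'a set \<Rightarrow> 'a set set \<Rightarrow> nat \<Rightarrow> 'a set set \<Rightarrow> bool" where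
  "additive_spanner V E k H \<longleftrightarrow> (\<forall>u\<in>V. \<forall>v\<in>V. dist H u v \<le> dist E u v + enat k)"

end

theory Submission imports Defs begin
lemma walk_single[simp]: "walk E [a]"
  by (simp add: walk_def)

lemma walk_Cons2: "walk E (x # y # ys) \<longleftrightarrow> {x,y} \<in> E \<and> walk E (y # ys)"
  unfolding walk_def
  by (auto simp: nth_Cons split: nat.splits)

lemma walk_append: "walk E xs \<Longrightarrow> walk E (y # ys) \<Longrightarrow> last xs = y \<Longrightarrow> walk E (xs @ ys)"
proof (induction xs)
  case Nil then show ?case by (simp add: walk_def)
next
  case (Cons x xs)
  show ?case
  proof (cases xs)
    case Nil then show ?thesis using Cons by simp
  next
    case (Cons z zs)
    then show ?thesis using Cons.prems Cons.IH by (simp add: walk_Cons2)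
  qed
qed

definition reach :: "'a set set \<Rightarrow> 'a \<Rightarrow> 'a \<Rightarrow> nat \<Rightarrow> bool" where
  "reach E u v n \<longleftrightarrow> (\<exists>xs. walk E xs \<and> hd xs = u \<and> last xs = v \<and> length xs = Suc n)"

lemma reach0: "reach E u u 0"
  unfolding reach_def by (rule exI[of _ "[u]"]) simp

lemma reach_edge: "{u,v} \<in> E \<Longrightarrow> reach E u v 1"
  unfolding reach_def by (rule exI[of _ "[u,v]"]) (simp add: walk_Cons2)

lemma reach_trans: "reach E u v m \<Longrightarrow> reach E v w k \<Longrightarrow> reach E u w (m + k)"
proof -
  assume "reach E u v m" "reach E v w k"
  then obtain xs ys where xs: "walk E xs" "hd xs = u" "last xs = v" "length xs = Suc m"
    and ys: "walk E ys" "hd ys = v" "last ys = w" "length ys = Suc k"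
    unfolding reach_def by blast
  obtain ys' where ys': "ys = v # ys'" using ys by (cases ys) auto
  have "walk E (xs @ ys')" using walk_append[of E xs v ys'] xs ys ys' by simp
  moreover have "hd (xs @ ys') = u" using xs by (cases xs) auto
  moreover have "last (xs @ ys') = w" using xs ys ys' by (cases "ys' = []") auto
  moreover have "length (xs @ ys') = Suc (m + k)" using xs ys ys' by simp
  ultimately show ?thesis unfolding reach_def by blast
qed

lemma walk_rev: "walk E xs \<Longrightarrow> walk E (rev xs)"
  unfolding walk_def
proof (intro conjI allI impI)
  show "xs \<noteq> [] \<and> (\<forall>i. Suc i < length xs \<longrightarrow> {xs ! i, xs ! Suc i} \<in> E) \<Longrightarrow> rev xs \<noteq> []" by simp
  fix i assume w: "xs \<noteq> [] \<and> (\<forall>i. Suc i < length xs \<longrightarrow> {xs ! i, xs ! Suc i} \<in> E)"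
    and i: "Suc i < length (rev xs)"
  let ?n = "length xs"
  have j: "Suc (?n - Suc (Suc i)) < ?n" using i by simp
  have "{xs ! (?n - Suc (Suc i)), xs ! Suc (?n - Suc (Suc i))} \<in> E" using w j by blast
  moreover have "Suc (?n - Suc (Suc i)) = ?n - Suc i" using i by simp
  ultimately show "{rev xs ! i, rev xs ! Suc i} \<in> E" using i
    by (simp add: rev_nth insert_commute)
qed

lemma reach_sym: "reach E u v n \<Longrightarrow> reach E v u n"
proof -
  assume "reach E u v n"
  then obtain xs where xs: "walk E xs" "hd xs = u" "last xs = v" "length xs = Suc n"
    unfolding reach_def by blast
  then have "xs \<noteq> []" by auto
  then have "walk E (rev xs) \<and> hd (rev xs) = v \<and> last (rev xs) = u \<and> length (rev xs) = Suc n"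
    using xs walk_rev by (simp add: hd_rev last_rev)
  then show ?thesis unfolding reach_def by blast
qed

lemma reach_mono: "reach E u v n \<Longrightarrow> E \<subseteq> F \<Longrightarrow> reach F u v n"
  unfolding reach_def walk_def by blast

lemma dist_alt: "dist E u v = Inf {enat n | n. reach E u v n}"
proof -
  have "{enat (length xs - 1) | xs. walk E xs \<and> hd xs = u \<and> last xs = v} = {enat n | n. reach E u v n}"
  proof (intro equalityI subsetI)
    fix z assume "z \<in> {enat (length xs - 1) | xs. walk E xs \<and> hd xs = u \<and> last xs = v}"
    then obtain xs where xs: "z = enat (length xs - 1)" "walk E xs" "hd xs = u" "last xs = v" by blast
    then have "xs \<noteq> []" unfolding walk_def by blast
    then have "length xs = Suc (length xs - 1)" by simp
    then have "reach E u v (length xs - 1)" unfolding reach_def using xs by blast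
    then show "z \<in> {enat n | n. reach E u v n}" using xs by blast
  next
    fix z assume "z \<in> {enat n | n. reach E u v n}"
    then obtain n xs where "z = enat n" "walk E xs" "hd xs = u" "last xs = v" "length xs = Suc n"
      unfolding reach_def by blast
    then show "z \<in> {enat (length xs - 1) | xs. walk E xs \<and> hd xs = u \<and> last xs = v}" by force
  qed
  then show ?thesis unfolding dist_def by simp
qed

lemma dist_le: "reach E u v n \<Longrightarrow> dist E u v \<le> enat n"
  unfolding dist_alt by (rule Inf_lower) blast

lemma dist_ex: "dist E u v = enat m \<Longrightarrow> reach E u v m"
proof -
  assume a: "dist E u v = enat m"
  let ?A = "{enat n | n. reach E u v n}"
  have ne: "?A \<noteq> {}" using a unfolding dist_alt by (auto simp: Inf_enat_def split: if_splits)
  then have "Inf ?A \<in> ?A" unfolding Inf_enat_def by (auto intro: LeastI)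
  then show ?thesis using a unfolding dist_alt by auto
qed

lemma dist_leD: "dist E u v \<le> enat n \<Longrightarrow> \<exists>m\<le>n. reach E u v m"
  by (metis dist_ex enat_ile enat_ord_simps(1))

lemma dist_triangle: "dist E u w \<le> dist E u v + dist E v w"
proof (cases "dist E u v")
  case (enat a)
  show ?thesis
  proof (cases "dist E v w")
    case (enat b)
    have "reach E u w (a+b)" using reach_trans[OF dist_ex[OF \<open>dist E u v = enat a\<close>] dist_ex[OF enat]] .
    then show ?thesis using dist_le \<open>dist E u v = enat a\<close> enat by fastforce
  qed simp
qed simp

lemma dist_sym: "dist E u v = dist E v u"
  unfolding dist_alt using reach_sym by metis

lemma dist_mono: "E \<subseteq> F \<Longrightarrow> dist F u v \<le> dist E u v"
  by (cases "dist E u v") (auto dest!: dist_ex intro: dist_le reach_mono)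

lemma dist_self: "dist E u u = 0"
  using dist_le[OF reach0, of E u] by (simp add: zero_enat_def[symmetric])

lemma dist_edge: "{u,v} \<in> E \<Longrightarrow> dist E u v \<le> 1"
  using dist_le[OF reach_edge] by (simp add: one_enat_def)

lemma reach_seg:
  assumes "\<And>k. i \<le> k \<Longrightarrow> k < j \<Longrightarrow> {p!k, p!Suc k} \<in> F" "i \<le> j"
  shows "reach F (p!i) (p!j) (j-i)"
proof -
  let ?xs = "map (\<lambda>k. p!(i+k)) [0..<Suc (j-i)]"
  have "walk F ?xs" unfolding walk_def using assms
    by (auto simp del: upt_Suc)
  moreover have "hd ?xs = p!i" by (simp del: upt_Suc add: hd_map)
  moreover have "last ?xs = p!j" using assms(2) by (simp del: upt_Suc add: last_map)
  ultimately show ?thesis unfolding reach_def by (intro exI[of _ ?xs]) simp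
qed

lemma tri_le: "dist F a b \<le> enat m \<Longrightarrow> dist F b c \<le> enat n \<Longrightarrow> dist F a c \<le> enat (m+n)"
proof -
  assume a: "dist F a b \<le> enat m" "dist F b c \<le> enat n"
  have "dist F a c \<le> dist F a b + dist F b c" by (rule dist_triangle)
  also have "\<dots> \<le> enat m + enat n" using a by (rule add_mono)
  finally show ?thesis by simp
qed

locale setting =
  fixes V :: "'a set" and E :: "'a set set" and S :: "'a \<Rightarrow> 'a set set" and d :: nat
  assumes sg: "simple_graph V E"
  and Sx: "\<And>x. x\<in>V \<Longrightarrow> S x \<subseteq> {e \<in> E. x \<in> e} \<and> card (S x) = min (degree E x) d"
begin

definition H0 where "H0 = (\<Union>x\<in>V. S x)"
definition heavy where "heavy h \<longleftrightarrow> h \<in> V \<and> d \<le> degree E h"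
definition N where "N h = {y. {h,y} \<in> S h}"
definition C where "C h = insert h (N h)"
definition psi where "psi F x y = card {j. j < (5::nat) \<and> dist E x y + enat j < dist F x y}"
definition Psi where "Psi F = (\<Sum>q\<in>V\<times>V. psi F (fst q) (snd q))"

lemma finV: "finite V" using sg unfolding simple_graph_def by blast

lemma edgeD: "e \<in> E \<Longrightarrow> \<exists>a b. a \<in> V \<and> b \<in> V \<and> a \<noteq> b \<and> e = {a,b}"
  using sg unfolding simple_graph_def by blast

lemma finE: "finite E"
proof -
  have "E \<subseteq> Pow V" using edgeD by blast
  then show ?thesis using finV finite_subset by blast
qed

lemma edge_V: "{a,b} \<in> E \<Longrightarrow> a \<in> V \<and> b \<in> V \<and> a \<noteq> b"
  using edgeD[of "{a,b}"] by (auto simp: doubleton_eq_iff)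

lemma H0_sub: "H0 \<subseteq> E" unfolding H0_def using Sx by blast

lemma light: assumes "w \<in> V" "\<not> heavy w" "e \<in> E" "w \<in> e" shows "e \<in> H0"
proof -
  have "card (S w) = card {e \<in> E. w \<in> e}" using Sx[OF assms(1)] assms(1,2)
    unfolding heavy_def degree_def by simp
  moreover have "finite {e \<in> E. w \<in> e}" using finE by simp
  ultimately have "S w = {e \<in> E. w \<in> e}" using Sx[OF assms(1)] card_subset_eq by blast
  then show ?thesis using assms unfolding H0_def by blast
qed


lemma C_edge: assumes "h \<in> V" "y \<in> C h" shows "y = h \<or> {h,y} \<in> H0"
  using assms unfolding C_def N_def H0_def by blast

lemma C_V: assumes "h \<in> V" "y \<in> C h" shows "y \<in> V"
  using C_edge[OF assms] assms(1) H0_sub edge_V by blast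

lemma C_dist: assumes "h \<in> V" "y \<in> C h" "H0 \<subseteq> F"
  shows "dist F h y \<le> enat 1" "dist F y h \<le> enat 1"
proof -
  show "dist F h y \<le> enat 1"
    using C_edge[OF assms(1,2)] assms(3) dist_self[of F h] dist_edge[of h y F]
    by (auto simp: one_enat_def zero_enat_def)
  then show "dist F y h \<le> enat 1" by (simp add: dist_sym)
qed

lemma card_C: assumes "heavy h" shows "card (C h) = Suc d" "finite (C h)"
proof -
  have hV: "h \<in> V" using assms heavy_def by auto
  have Sh: "S h \<subseteq> {e \<in> E. h \<in> e}" "card (S h) = d"
    using Sx[OF hV] assms unfolding heavy_def by auto
  have bij: "bij_betw (\<lambda>y. {h,y}) (N h) (S h)"
  proof (rule bij_betwI')
    fix x y assume "x \<in> N h" "y \<in> N h"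
    show "({h, x} = {h, y}) = (x = y)" by (auto simp: doubleton_eq_iff)
  next
    fix x assume "x \<in> N h" then show "{h,x} \<in> S h" unfolding N_def by simp
  next
    fix e assume "e \<in> S h"
    then have "e \<in> E" "h \<in> e" using Sh by auto
    then obtain a b where "e = {a,b}" using edgeD by blast
    then obtain y where "e = {h,y}" using \<open>h \<in> e\<close> by auto
    then show "\<exists>y\<in>N h. e = {h, y}" using \<open>e \<in> S h\<close> unfolding N_def by auto
  qed
  have fN: "finite (N h)" using C_V[OF hV] unfolding C_def
    by (metis finV finite_subset insertCI subsetI)
  have "h \<notin> N h" unfolding N_def using Sh edge_V[of h h] by auto
  then show "card (C h) = Suc d" unfolding C_def
    using fN bij_betw_same_card[OF bij] Sh by simp
  show "finite (C h)" using fN unfolding C_def by simp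
qed

lemma psi_sub: "F \<subseteq> F' \<Longrightarrow> {j. j < (5::nat) \<and> dist E x y + enat j < dist F' x y} \<subseteq> {j. j < (5::nat) \<and> dist E x y + enat j < dist F x y}"
proof
  fix j assume "F \<subseteq> F'" "j \<in> {j. j < (5::nat) \<and> dist E x y + enat j < dist F' x y}"
  then show "j \<in> {j. j < (5::nat) \<and> dist E x y + enat j < dist F x y}"
    using dist_mono[of F F' x y] less_le_trans by auto
qed

lemma psi_mono: "F \<subseteq> F' \<Longrightarrow> psi F' x y \<le> psi F x y"
  unfolding psi_def
  by (rule card_mono) (simp_all add: psi_sub)

lemma psi_le5: "psi F x y \<le> 5"
proof -
  have "psi F x y \<le> card {..<(5::nat)}" unfolding psi_def by (rule card_mono) auto
  then show ?thesis by simp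
qed

lemma psi_drop:
  assumes "F \<subseteq> F'" "dist F' x y \<le> enat (D+2)" "enat D \<le> dist E x y + 2"
    "dist E x y \<le> enat (D+2)" "enat (D+2) < dist F x y"
  shows "psi F' x y < psi F x y"
proof -
  obtain g where g: "dist E x y = enat g" using assms(4) by (cases "dist E x y") auto
  have gD: "g \<le> D+2" "D \<le> g+2" using assms(3,4) g by (auto simp: numeral_eq_enat)
  define j0 where "j0 = D + 2 - g"
  have j0: "j0 < 5" "g + j0 = D+2" using gD unfolding j0_def by auto
  let ?A = "{j. j < (5::nat) \<and> dist E x y + enat j < dist F x y}"
  let ?B = "{j. j < (5::nat) \<and> dist E x y + enat j < dist F' x y}"
  have "j0 \<in> ?A" using j0 g assms(5) by simp
  moreover have "j0 \<notin> ?B" using j0 g assms(2) by (simp add: not_less)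
  moreover have "?B \<subseteq> ?A" using psi_sub[OF assms(1)] .
  ultimately have "?B \<subset> ?A" by blast
  then show ?thesis unfolding psi_def by (rule psubset_card_mono[rotated]) simp
qed

lemma Psi_bound: "Psi F \<le> 5 * (card V * card V)"
proof -
  have "Psi F \<le> (\<Sum>q\<in>V\<times>V. 5)" unfolding Psi_def by (rule sum_mono) (rule psi_le5)
  then show ?thesis by (simp add: card_cartesian_product)
qed


lemma walk_V: "walk E p \<Longrightarrow> hd p \<in> V \<Longrightarrow> i < length p \<Longrightarrow> p!i \<in> V"
proof (induction i)
  case 0 then show ?case by (simp add: hd_conv_nth walk_def)
next
  case (Suc i)
  then have "{p!i, p!Suc i} \<in> E" unfolding walk_def by blast
  then show ?case using edge_V by blast
qed

lemma window:
  assumes "h1 \<in> V" "h2 \<in> V" "y \<in> C h1" "y \<in> C h2"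
  shows "dist E h1 h2 \<le> enat 2"
proof -
  have "dist E h1 y \<le> enat 1" "dist E y h2 \<le> enat 1"
    using C_dist[OF assms(1,3)] C_dist[OF assms(2,4)] H0_sub by auto
  then have "dist E h1 h2 \<le> enat (1+1)" by (rule tri_le)
  then show ?thesis by (simp add: numeral_2_eq_2)
qed

lemma card_window:
  assumes "finite I" "\<And>i j. i \<in> I \<Longrightarrow> j \<in> I \<Longrightarrow> i \<le> j \<Longrightarrow> j - i \<le> (2::nat)"
  shows "card I \<le> 3"
proof (cases "I = {}")
  case False
  define m where "m = Min I"
  have "I \<subseteq> {m..m+2}"
  proof
    fix i assume "i \<in> I"
    then have "m \<le> i" "m \<in> I" using assms(1) False unfolding m_def by auto
    then show "i \<in> {m..m+2}" using assms(2)[of m i] \<open>i \<in> I\<close> by auto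
  qed
  then have "card I \<le> card {m..m+2}" by (rule card_mono[rotated]) simp
  then show ?thesis by simp
qed simp

lemma step:
  assumes H0H: "H0 \<subseteq> H" and HE: "H \<subseteq> E" and cs: "completion_step V E 6 H H'"
  shows "H \<subseteq> H' \<and> H' \<subseteq> E \<and> (Suc d)^2 * card H' + 3 * Psi H' \<le> (Suc d)^2 * card H + 3 * Psi H"
proof -
  obtain u v p where uV: "u \<in> V" and vV: "v \<in> V"
    and viol: "dist H u v > dist E u v + enat 6"
    and pw: "walk E p" and hp: "hd p = u" and lp: "last p = v"
    and plen: "enat (length p - 1) = dist E u v" and H'def: "H' = H \<union> walk_edges p"
    using cs unfolding completion_step_def by blast
  define L where "L = length p - 1"
  have pne: "p \<noteq> []" using pw walk_def by blast
  have lenp: "length p = Suc L" using pne L_def by simp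
  have p0: "p!0 = u" using hp pne by (simp add: hd_conv_nth)
  have pL: "p!L = v" using lp pne L_def by (simp add: last_conv_nth)
  have pV: "\<And>i. i \<le> L \<Longrightarrow> p!i \<in> V" using walk_V[OF pw] hp uV lenp by simp
  have pE: "\<And>k. k < L \<Longrightarrow> {p!k, p!Suc k} \<in> E" using pw lenp unfolding walk_def by simp
  have pH': "\<And>k. k < L \<Longrightarrow> {p!k, p!Suc k} \<in> H'" using lenp unfolding H'def walk_edges_def by auto
  have wE: "walk_edges p \<subseteq> E" using pw unfolding walk_edges_def walk_def by auto
  have H'E: "H' \<subseteq> E" using wE HE H'def by auto
  have HH': "H \<subseteq> H'" using H'def by auto
  have H0H': "H0 \<subseteq> H'" using H0H HH' by auto
  have dEuv: "dist E u v = enat L" using plen L_def by simp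
  have viol': "enat (L+6) < dist H u v" using viol dEuv by simp
  have short: "\<And>i j. i \<le> j \<Longrightarrow> j \<le> L \<Longrightarrow> enat (j-i) \<le> dist E (p!i) (p!j)"
  proof -
    fix i j assume ij: "i \<le> j" "j \<le> L"
    show "enat (j-i) \<le> dist E (p!i) (p!j)"
    proof (cases "dist E (p!i) (p!j)")
      case (enat x)
      have a: "dist E u (p!i) \<le> enat i"
        using dist_le[OF reach_seg[of 0 i p E]] pE ij p0 by simp
      have b: "dist E (p!j) v \<le> enat (L-j)"
        using dist_le[OF reach_seg[of j L p E]] pE ij pL by simp
      have "dist E u v \<le> enat (i + x + (L-j))"
        using tri_le[OF tri_le[OF a] b] enat by simp
      then have "L \<le> i + x + (L - j)" using dEuv by simp
      then show ?thesis using enat ij by simp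
    qed simp
  qed
  have up: "\<And>i j. i \<le> j \<Longrightarrow> j \<le> L \<Longrightarrow> dist H' (p!i) (p!j) \<le> enat (j-i)"
  proof -
    fix i j assume ij: "i \<le> j" "j \<le> L"
    have "reach H' (p!i) (p!j) (j-i)" by (rule reach_seg) (use pH' ij in auto)
    then show "dist H' (p!i) (p!j) \<le> enat (j-i)" by (rule dist_le)
  qed
  define Hv where "Hv = {i. i \<le> L \<and> heavy (p!i)}"
  have finHv: "finite Hv" unfolding Hv_def by simp
  have light_edge: "\<And>k. k < L \<Longrightarrow> k \<notin> Hv \<or> Suc k \<notin> Hv \<Longrightarrow> {p!k, p!Suc k} \<in> H"
  proof -
    fix k assume k: "k < L" "k \<notin> Hv \<or> Suc k \<notin> Hv"
    then have "\<not> heavy (p!k) \<or> \<not> heavy (p!Suc k)" unfolding Hv_def by auto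
    then have "{p!k, p!Suc k} \<in> H0"
    proof
      assume "\<not> heavy (p!k)"
      then show ?thesis using light[of "p!k" "{p!k, p!Suc k}"] pV[of k] pE[of k] k(1) by simp
    next
      assume "\<not> heavy (p!Suc k)"
      then show ?thesis using light[of "p!Suc k" "{p!k, p!Suc k}"] pV[of "Suc k"] pE[of k] k(1) by simp
    qed
    then show "{p!k, p!Suc k} \<in> H" using H0H by auto
  qed
  have Hvne: "Hv \<noteq> {}"
  proof
    assume "Hv = {}"
    then have "reach H (p!0) (p!L) (L - 0)" using light_edge by (intro reach_seg) auto
    then have "dist H u v \<le> enat L" using dist_le[of H u v L] p0 pL by simp
    with viol' have "enat (L+6) < enat L" by (rule less_le_trans)
    then show False by simp
  qed
  define i1 where "i1 = Min Hv"
  define it where "it = Max Hv"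
  have i1: "i1 \<in> Hv" "\<And>i. i \<in> Hv \<Longrightarrow> i1 \<le> i" using finHv Hvne unfolding i1_def by auto
  have it: "it \<in> Hv" "\<And>i. i \<in> Hv \<Longrightarrow> i \<le> it" using finHv Hvne unfolding it_def by auto
  have itL: "it \<le> L" using it unfolding Hv_def by auto
  have heavyHv: "\<And>i. i \<in> Hv \<Longrightarrow> heavy (p!i)" "\<And>i. i \<in> Hv \<Longrightarrow> i \<le> L" unfolding Hv_def by auto
  have left: "dist H u (p!i1) \<le> enat i1"
  proof -
    have nk: "k \<notin> Hv" if "k < i1" for k
    proof
      assume "k \<in> Hv" then have "i1 \<le> k" by (rule i1(2))
      with that show False by simp
    qed
    have "i1 \<le> L" using it(2)[OF i1(1)] itL by simp
    then have "reach H (p!0) (p!i1) (i1 - 0)"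
      using light_edge nk by (intro reach_seg) auto
    then show ?thesis using dist_le[of H u "p!i1" i1] p0 by simp
  qed
  have right: "dist H (p!it) v \<le> enat (L - it)"
  proof -
    have nk: "Suc k \<notin> Hv" if "it \<le> k" for k
    proof
      assume "Suc k \<in> Hv" then have "Suc k \<le> it" by (rule it(2))
      with that show False by simp
    qed
    have "reach H (p!it) (p!L) (L - it)"
      using light_edge nk itL by (intro reach_seg) auto
    then show ?thesis using dist_le[of H "p!it" v "L - it"] pL by simp
  qed
  have miss: "H' - H \<subseteq> (\<lambda>k. {p!k, p!Suc k}) ` Hv"
  proof
    fix e assume e: "e \<in> H' - H"
    then obtain k where k: "e = {p!k, p!Suc k}" "Suc k < length p"
      unfolding H'def walk_edges_def by auto
    then have "k < L" using lenp by simp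
    then have "k \<in> Hv" using light_edge e k by blast
    then show "e \<in> (\<lambda>k. {p!k, p!Suc k}) ` Hv" using k by blast
  qed
  have cardmiss: "card (H' - H) \<le> card Hv"
    using card_mono[OF finite_imageI[OF finHv] miss] card_image_le[OF finHv, of "\<lambda>k. {p!k, p!Suc k}"]
    by linarith
  define Y where "Y = (\<Union>i\<in>Hv. C (p!i))"
  have finY: "finite Y" unfolding Y_def using finHv card_C heavyHv by auto
  have YV: "Y \<subseteq> V" unfolding Y_def using C_V pV heavyHv by blast
  have cardY: "Suc d * card Hv \<le> 3 * card Y"
  proof -
    define Sg where "Sg = Sigma Hv (\<lambda>i. C (p!i))"
    define Sg' where "Sg' = Sigma Y (\<lambda>y. {i \<in> Hv. y \<in> C (p!i)})"
    have "card Sg = (\<Sum>i\<in>Hv. card (C (p!i)))" unfolding Sg_def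
      using finHv card_C heavyHv by (simp add: card_SigmaI)
    also have "\<dots> = Suc d * card Hv" using card_C heavyHv by simp
    finally have c1: "card Sg = Suc d * card Hv" .
    have "card Sg' = (\<Sum>y\<in>Y. card {i \<in> Hv. y \<in> C (p!i)})" unfolding Sg'_def
      using finY finHv by (simp add: card_SigmaI)
    also have "\<dots> \<le> (\<Sum>y\<in>Y. 3)"
    proof (rule sum_mono)
      fix y assume "y \<in> Y"
      show "card {i \<in> Hv. y \<in> C (p!i)} \<le> 3"
      proof (rule card_window)
        fix i j assume ij: "i \<in> {i \<in> Hv. y \<in> C (p!i)}" "j \<in> {i \<in> Hv. y \<in> C (p!i)}" "i \<le> j"
        have "dist E (p!i) (p!j) \<le> enat 2"
          using window[of "p!i" "p!j" y] ij pV heavyHv by auto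
        moreover have "enat (j - i) \<le> dist E (p!i) (p!j)" using short ij heavyHv by auto
        ultimately show "j - i \<le> 2" by (meson enat_ord_simps(1) order_trans)
      qed (use finHv in simp)
    qed
    also have "\<dots> = 3 * card Y" by simp
    finally have c2: "card Sg' \<le> 3 * card Y" .
    have "card Sg \<le> card Sg'"
    proof (rule card_inj_on_le)
      show "inj_on prod.swap Sg" by simp
      show "prod.swap ` Sg \<subseteq> Sg'" unfolding Sg_def Sg'_def Y_def by auto
      show "finite Sg'" unfolding Sg'_def using finY finHv by simp
    qed
    then show ?thesis using c1 c2 by simp
  qed
  define DP where "DP = {q \<in> V \<times> V. psi H' (fst q) (snd q) < psi H (fst q) (snd q)}"
  have i1V: "p!i1 \<in> V" "heavy (p!i1)" using pV heavyHv i1 by auto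
  have itV: "p!it \<in> V" "heavy (p!it)" using pV heavyHv it by auto
  have key: "\<And>y. y \<in> Y \<Longrightarrow> \<exists>c. c \<in> {p!i1, p!it} \<and> (\<forall>a\<in>C c. (y,a) \<in> DP)"
  proof (rule ccontr)
    fix y assume yY: "y \<in> Y" and neg: "\<not> (\<exists>c. c \<in> {p!i1, p!it} \<and> (\<forall>a\<in>C c. (y,a) \<in> DP))"
    obtain k where k: "k \<in> Hv" "y \<in> C (p!k)" using yY unfolding Y_def by blast
    have kL: "k \<le> L" "i1 \<le> k" "k \<le> it" using heavyHv(2)[OF k(1)] i1(2)[OF k(1)] it(2)[OF k(1)] by auto
    have pkV: "p!k \<in> V" using pV kL by simp
    have yV: "y \<in> V" using C_V[OF pkV k(2)] .
    obtain x where x: "x \<in> C (p!i1)" "(y,x) \<notin> DP" using neg by blast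
    obtain z where z: "z \<in> C (p!it)" "(y,z) \<notin> DP" using neg by blast
    have xV: "x \<in> V" using C_V[OF i1V(1) x(1)] .
    have zV: "z \<in> V" using C_V[OF itV(1) z(1)] .
    define D1 where "D1 = k - i1"
    define D2 where "D2 = it - k"
    have hx: "dist H y x \<le> enat (D1+2)"
    proof (rule ccontr)
      assume "\<not> ?thesis"
      then have lt: "enat (D1+2) < dist H y x" by simp
      have a1: "dist H' y (p!k) \<le> enat 1" using C_dist(2)[OF pkV k(2) H0H'] .
      have "dist H' (p!i1) (p!k) \<le> enat (k - i1)" by (rule up) (use kL in auto)
      then have a2: "dist H' (p!k) (p!i1) \<le> enat D1" by (simp add: dist_sym D1_def)
      have a3: "dist H' (p!i1) x \<le> enat 1" using C_dist(1)[OF i1V(1) x(1) H0H'] .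
      have "dist H' y x \<le> enat (1 + D1 + 1)" by (rule tri_le[OF tri_le[OF a1 a2] a3])
      then have h1: "dist H' y x \<le> enat (D1 + 2)" by simp
      have h3: "dist E y x \<le> enat (D1 + 2)" using dist_mono[OF H'E, of y x] h1 by simp
      obtain g where g: "dist E y x = enat g" using h3 by (cases "dist E y x") auto
      have b1: "dist E (p!i1) x \<le> enat 1" using C_dist(1)[OF i1V(1) x(1) H0_sub] .
      have b2: "dist E x y \<le> enat g" using g by (simp add: dist_sym)
      have b3: "dist E y (p!k) \<le> enat 1" using C_dist(2)[OF pkV k(2) H0_sub] .
      have m1: "dist E (p!i1) (p!k) \<le> enat (1 + g + 1)" by (rule tri_le[OF tri_le[OF b1 b2] b3])
      have m2: "enat D1 \<le> dist E (p!i1) (p!k)" using short[of i1 k] kL unfolding D1_def by simp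
      have "enat D1 \<le> enat (1 + g + 1)" using order_trans[OF m2 m1] .
      then have "D1 \<le> g + 2" by simp
      then have h2: "enat D1 \<le> dist E y x + 2" using g by (simp add: numeral_eq_enat)
      have "psi H' y x < psi H y x" by (rule psi_drop[OF HH' h1 h2 h3 lt])
      then have "(y,x) \<in> DP" unfolding DP_def using xV yV by simp
      then show False using x(2) by simp
    qed
    have hz: "dist H y z \<le> enat (D2+2)"
    proof (rule ccontr)
      assume "\<not> ?thesis"
      then have lt: "enat (D2+2) < dist H y z" by simp
      have a1: "dist H' y (p!k) \<le> enat 1" using C_dist(2)[OF pkV k(2) H0H'] .
      have a2: "dist H' (p!k) (p!it) \<le> enat D2" unfolding D2_def by (rule up) (use kL itL in auto)
      have a3: "dist H' (p!it) z \<le> enat 1" using C_dist(1)[OF itV(1) z(1) H0H'] .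
      have "dist H' y z \<le> enat (1 + D2 + 1)" by (rule tri_le[OF tri_le[OF a1 a2] a3])
      then have h1: "dist H' y z \<le> enat (D2 + 2)" by simp
      have h3: "dist E y z \<le> enat (D2 + 2)" using dist_mono[OF H'E, of y z] h1 by simp
      obtain g where g: "dist E y z = enat g" using h3 by (cases "dist E y z") auto
      have b1: "dist E (p!k) y \<le> enat 1" using C_dist(1)[OF pkV k(2) H0_sub] .
      have b2: "dist E y z \<le> enat g" using g by simp
      have b3: "dist E z (p!it) \<le> enat 1" using C_dist(2)[OF itV(1) z(1) H0_sub] .
      have m1: "dist E (p!k) (p!it) \<le> enat (1 + g + 1)" by (rule tri_le[OF tri_le[OF b1 b2] b3])
      have m2: "enat D2 \<le> dist E (p!k) (p!it)" using short[of k it] kL itL unfolding D2_def by simp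
      have "enat D2 \<le> enat (1 + g + 1)" using order_trans[OF m2 m1] .
      then have "D2 \<le> g + 2" by simp
      then have h2: "enat D2 \<le> dist E y z + 2" using g by (simp add: numeral_eq_enat)
      have "psi H' y z < psi H y z" by (rule psi_drop[OF HH' h1 h2 h3 lt])
      then have "(y,z) \<in> DP" unfolding DP_def using zV yV by simp
      then show False using z(2) by simp
    qed
    have c2: "dist H (p!i1) x \<le> enat 1" using C_dist(1)[OF i1V(1) x(1) H0H] .
    have c3: "dist H x y \<le> enat (D1+2)" using hx by (simp add: dist_sym)
    have c5: "dist H z (p!it) \<le> enat 1" using C_dist(2)[OF itV(1) z(1) H0H] .
    have cc: "dist H u v \<le> enat (i1 + 1 + (D1+2) + (D2+2) + 1 + (L - it))"
      by (rule tri_le[OF tri_le[OF tri_le[OF tri_le[OF tri_le[OF left c2] c3] hz] c5] right])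
    have "i1 + 1 + (D1+2) + (D2+2) + 1 + (L - it) = L + 6"
      using kL itL unfolding D1_def D2_def by simp
    then have "dist H u v \<le> enat (L+6)" using cc by metis
    then show False using viol' by simp
  qed
  define cy where "cy y = (SOME c. c \<in> {p!i1, p!it} \<and> (\<forall>a\<in>C c. (y,a) \<in> DP))" for y
  have cy: "\<And>y. y \<in> Y \<Longrightarrow> cy y \<in> {p!i1, p!it} \<and> (\<forall>a\<in>C (cy y). (y,a) \<in> DP)"
    unfolding cy_def using key by (rule someI_ex)
  have cyH: "heavy (cy y)" if y: "y \<in> Y" for y
  proof -
    have "cy y = p!i1 \<or> cy y = p!it" using cy[OF y] by simp
    then show ?thesis using i1V itV by auto
  qed
  have cardDP: "Suc d * card Y \<le> card DP"
  proof -
    have "card (Sigma Y (\<lambda>y. C (cy y))) = (\<Sum>y\<in>Y. card (C (cy y)))"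
      using finY card_C(2)[OF cyH] by (intro card_SigmaI) auto
    also have "\<dots> = (\<Sum>y\<in>Y. Suc d)" using card_C(1)[OF cyH] by (intro sum.cong) auto
    finally have "card (Sigma Y (\<lambda>y. C (cy y))) = Suc d * card Y" by simp
    moreover have "Sigma Y (\<lambda>y. C (cy y)) \<subseteq> DP" using cy by auto
    moreover have "finite DP" unfolding DP_def using finV by simp
    ultimately show ?thesis using card_mono[of DP "Sigma Y (\<lambda>y. C (cy y))"] by simp
  qed
  have PsiDP: "Psi H' + card DP \<le> Psi H"
  proof -
    have "card DP = (\<Sum>q\<in>V\<times>V. if psi H' (fst q) (snd q) < psi H (fst q) (snd q) then 1 else 0)"
      unfolding DP_def using finV by (simp add: sum.inter_filter[symmetric])
    then have "Psi H' + card DP = (\<Sum>q\<in>V\<times>V. psi H' (fst q) (snd q) + (if psi H' (fst q) (snd q) < psi H (fst q) (snd q) then 1 else 0))"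
      unfolding Psi_def by (simp add: sum.distrib)
    also have "\<dots> \<le> Psi H" unfolding Psi_def
      by (rule sum_mono) (use psi_mono[OF HH'] in \<open>auto simp: Suc_leI\<close>)
    finally show ?thesis .
  qed
  have cardH': "card H' = card H + card (H' - H)"
  proof -
    have "H' = H \<union> (H' - H)" using HH' by auto
    moreover have "finite H" using HE finE finite_subset by blast
    moreover have "finite (H' - H)" using H'E finE finite_subset by blast
    ultimately show ?thesis using card_Un_disjoint[of H "H' - H"] by simp
  qed
  have "(Suc d)^2 * card (H' - H) \<le> (Suc d)^2 * card Hv"
    using cardmiss by (rule mult_le_mono2)
  also have "\<dots> = Suc d * (Suc d * card Hv)" by (simp add: power2_eq_square algebra_simps)
  also have "\<dots> \<le> Suc d * (3 * card Y)" using cardY by (rule mult_le_mono2)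
  also have "\<dots> = 3 * (Suc d * card Y)" by simp
  also have "\<dots> \<le> 3 * card DP" using cardDP by (rule mult_le_mono2)
  finally have "(Suc d)^2 * card (H' - H) \<le> 3 * card DP" .
  moreover have "(Suc d)^2 * card H' = (Suc d)^2 * card H + (Suc d)^2 * card (H' - H)"
    using cardH' by (simp add: add_mult_distrib2)
  ultimately have "(Suc d)^2 * card H' + 3 * Psi H' \<le> (Suc d)^2 * card H + 3 * Psi H"
    using PsiDP by linarith
  then show ?thesis using HH' H'E by simp
qed

lemma run:
  assumes "(completion_step V E 6)\<^sup>*\<^sup>* H0 H"
  shows "H0 \<subseteq> H \<and> H \<subseteq> E \<and> (Suc d)^2 * card H + 3 * Psi H \<le> (Suc d)^2 * card H0 + 3 * Psi H0"
  using assms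
proof (induction rule: rtranclp_induct)
  case base then show ?case using H0_sub by simp
next
  case (step H H')
  then have a: "H0 \<subseteq> H" "H \<subseteq> E" "(Suc d)^2 * card H + 3 * Psi H \<le> (Suc d)^2 * card H0 + 3 * Psi H0"
    by auto
  have "H \<subseteq> H' \<and> H' \<subseteq> E \<and> (Suc d)^2 * card H' + 3 * Psi H' \<le> (Suc d)^2 * card H + 3 * Psi H"
    using setting.step[OF setting_axioms a(1,2) step(2)] .
  then show ?case using a by auto
qed

lemma cardH0: "card H0 \<le> card V * d"
proof -
  have "card H0 \<le> (\<Sum>x\<in>V. card (S x))" unfolding H0_def by (rule card_UN_le[OF finV])
  also have "\<dots> \<le> (\<Sum>x\<in>V. d)" by (rule sum_mono) (use Sx in auto)
  finally show ?thesis by simp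
qed

lemma nat_bound:
  assumes "(completion_step V E 6)\<^sup>*\<^sup>* H0 H"
  shows "(Suc d)^2 * card H \<le> (Suc d)^2 * (card V * d) + 15 * (card V * card V)"
proof -
  have r: "(Suc d)^2 * card H + 3 * Psi H \<le> (Suc d)^2 * card H0 + 3 * Psi H0" using run[OF assms] by simp
  have "(Suc d)^2 * card H0 \<le> (Suc d)^2 * (card V * d)" using cardH0 by (rule mult_le_mono2)
  moreover have "Psi H0 \<le> 5 * (card V * card V)" by (rule Psi_bound)
  ultimately show ?thesis using r by linarith
qed

end

lemma real_bound:
  fixes n d h :: nat
  assumes "(Suc d)^2 * h \<le> (Suc d)^2 * (n * d) + 15 * (n * n)"
    and "d = nat \<lfloor>real n powr (1/3)\<rfloor>"
  shows "real h \<le> 16 * real n powr (4/3)"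
proof -
  define a where "a = real n powr (1/3)"
  have a0: "0 \<le> a" unfolding a_def by simp
  have da: "real d \<le> a" using assms(2) a0 unfolding a_def by simp
  have ad: "a \<le> real d + 1" using assms(2) a0 unfolding a_def by linarith
  have n3: "real n = a^3"
  proof (cases "n = 0")
    case True then show ?thesis unfolding a_def by simp
  next
    case False
    then have "a^3 = a powr (real 3)" unfolding a_def by (simp add: powr_realpow)
    also have "\<dots> = real n" unfolding a_def using False by (simp add: powr_powr)
    finally show ?thesis by simp
  qed
  have n4: "real n powr (4/3) = a^4"
  proof (cases "n = 0")
    case True then show ?thesis unfolding a_def by simp
  next
    case False
    then have "a^4 = a powr (real 4)" unfolding a_def by (simp add: powr_realpow)
    also have "\<dots> = real n powr (4/3)" unfolding a_def using False by (simp add: powr_powr)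
    finally show ?thesis by simp
  qed
  define s where "s = real d + 1"
  have s1: "1 \<le> s" "a \<le> s" using ad unfolding s_def by auto
  have r: "s^2 * real h \<le> s^2 * (real n * real d) + 15 * (real n * real n)"
  proof -
    have "real ((Suc d)^2 * h) \<le> real ((Suc d)^2 * (n * d) + 15 * (n * n))"
      using assms(1) by (rule of_nat_mono)
    then show ?thesis unfolding s_def by (simp add: add.commute)
  qed
  have t1: "real n * real d \<le> a^4"
  proof -
    have "real n * real d \<le> a^3 * a" using n3 da by (simp add: mult_left_mono)
    then show ?thesis by (simp add: power_Suc2 [symmetric] eval_nat_numeral mult.assoc)
  qed
  have t2: "real n * real n \<le> a^4 * s^2"
  proof -
    have "real n * real n = a^4 * a^2" using n3 by (simp add: power_add[symmetric])
    also have "\<dots> \<le> a^4 * s^2" using s1 a0 by (intro mult_left_mono power_mono) auto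
    finally show ?thesis .
  qed
  have "s^2 * real h \<le> s^2 * a^4 + 15 * (a^4 * s^2)"
    using r t1 t2 mult_left_mono[OF t1, of "s^2"] by (smt (verit) zero_le_power2)
  then have "s^2 * real h \<le> s^2 * (16 * a^4)" by (simp add: algebra_simps)
  then have "real h \<le> 16 * a^4" using s1 by (simp add: mult_le_cancel_left)
  then show ?thesis using n4 by simp
qed

theorem theorem1:
  shows "\<exists>C::real. \<forall>(V::nat set) E (S::nat \<Rightarrow> nat set set) H.
     simple_graph V E \<and>
     (\<forall>x\<in>V. S x \<subseteq> {e \<in> E. x \<in> e} \<and>
        card (S x) = min (degree E x) (nat \<lfloor>real (card V) powr (1/3)\<rfloor>)) \<and>
     (completion_step V E 6)\<^sup>*\<^sup>* (\<Union>x\<in>V. S x) H \<and>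
     additive_spanner V E 6 H
     \<longrightarrow> real (card H) \<le> C * real (card V) powr (4/3)"
proof (intro exI[of _ 16] allI impI)
  fix V :: "nat set" and E and S :: "nat \<Rightarrow> nat set set" and H
  assume A: "simple_graph V E \<and>
     (\<forall>x\<in>V. S x \<subseteq> {e \<in> E. x \<in> e} \<and>
        card (S x) = min (degree E x) (nat \<lfloor>real (card V) powr (1/3)\<rfloor>)) \<and>
     (completion_step V E 6)\<^sup>*\<^sup>* (\<Union>x\<in>V. S x) H \<and>
     additive_spanner V E 6 H"
  define d where "d = nat \<lfloor>real (card V) powr (1/3)\<rfloor>"
  interpret setting V E S d using A unfolding d_def by unfold_locales auto
  have "(completion_step V E 6)\<^sup>*\<^sup>* H0 H" using A unfolding H0_def by simp
  then have "(Suc d)^2 * card H \<le> (Suc d)^2 * (card V * d) + 15 * (card V * card V)"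
    by (rule nat_bound)
  then show "real (card H) \<le> 16 * real (card V) powr (4/3)"
    using d_def by (rule real_bound)
qed
end
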